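(* Let $V=\bigoplus_{n\in\mathbb{Z}}V_n$ be an $\mathcal{H}$-module vertex algebra such that $V_n=0$ for $n<0$. Suppose $(\cdot,\cdot)$ is a bilinear form on $V$ such that $(Y(v,z)w,w')=(w,Y(e^{zL_1}(-z^{-2})^{\deg}v,z^{-1})w')$ for all $v,w,w'\in V$, and $(V_m,V_n)=0$ for all $m\ne n$. Then $(\cdot,\cdot)$ is symmetric.
   Context: Throughout, $\mathbb{F}$ is an algebraically closed field of odd prime characteristic $p$; vertex algebras are over $\mathbb{F}$. Every vertex algebra $V$ is a module for the bialgebra $\mathcal{B}$ with basis $\{\mathcal{D}^{(n)}\}_{n\in\mathbb{N}}$, $\mathcal{D}^{(m)}\mathcal{D}^{(n)}=\binom{m+n}{n}\mathcal{D}^{(m+n)}$, via $\mathcal{D}^{(n)}v=v_{-n-1}\mathbf{1}$. $\mathcal{H}$: let $\mathfrak{sl}_2$ over $\mathbb{C}$ have basis $L_{-1},L_0,L_1$ with $[L_1,L_{-1}]=2L_0$, $[L_0,L_{\pm1}]=\mp L_{\pm1}$; put $L_{\pm1}^{(n)}=L_{\pm1}^n/n!$, $L_0^{(n)}=\binom{-2L_0}{n}$ in $U(\mathfrak{sl}_2)$; $U(\mathfrak{sl}_2)_{\mathbb{Z}}$ is the $\mathbb{Z}$-span of the $L_{-1}^{(i)}L_0^{(j)}L_1^{(k)}$, and $\mathcal{H}=\mathbb{F}\otimes_{\mathbb{Z}}U(\mathfrak{sl}_2)_{\mathbb{Z}}$. $e^{zL_{\pm1}}=\sum_{n\ge0}z^nL_{\pm1}^{(n)}$.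 For $v$ homogeneous of degree $n$, $f(z)^{\deg}v:=f(z)^nv$, extended linearly. A $\mathbb{Z}$-graded vertex algebra: $V=\bigoplus V_n$, $\mathbf{1}\in V_0$, $u_rV_n\subset V_{m+n-r-1}$ for $u\in V_m$. A $\mathbb{Z}$-graded weight $\mathcal{H}$-module: $W=\bigoplus W_n$ with $\mathcal{H}$-action, $L_{\pm1}^{(r)}W_n\subset W_{n\mp r}$, $L_0^{(r)}|_{W_n}=\binom{-2n}{r}$. An $\mathcal{H}$-module vertex algebra: a $\mathbb{Z}$-graded vertex algebra $V$ which is a $\mathbb{Z}$-graded weight $\mathcal{H}$-module with $L_{-1}^{(n)}=\mathcal{D}^{(n)}$, such that $V_n=0$ for $n\ll0$, $L_1^{(n)}\mathbf{1}=\delta_{n,0}\mathbf{1}$, and $e^{zL_1}Y(v,z_0)e^{-zL_1}=Y\bigl(e^{z(1-zz_0)L_1}(1-zz_0)^{-2\deg}v,z_0/(1-zz_0)\bigr)$ for $v\in V$. *)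

theory Defs
  imports "HOL-Computational_Algebra.Polynomial"
begin

text \<open>Binomial coefficient with integer top, as an integer (then mapped into the field by of_int):
  m(m-1)...(m-k+1)/k!, the division being exact.\<close>
definition ibinom :: "int \<Rightarrow> nat \<Rightarrow> int" where
  "ibinom m k = (\<Prod>i<k. m - int i) div fact k"

definition graded_space :: "('a::field \<Rightarrow> 'v::ab_group_add \<Rightarrow> 'v) \<Rightarrow> (int \<Rightarrow> 'v set) \<Rightarrow> bool" where
  "graded_space sm Vg \<longleftrightarrow>
     (\<forall>n. module.subspace sm (Vg n)) \<and>
     (\<forall>v. \<exists>!c :: int \<Rightarrow> 'v. finite {n. c n \<noteq> 0} \<and> (\<forall>n. c n \<in> Vg n) \<and> v = sum c {n. c n \<noteq> 0})"

text \<open>Vertex algebra over the field: Y u n w is the mode u_n w; vac is the vacuum.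
  Truncation, vacuum and creation properties, and the Borcherds (Jacobi) identity
  (sums over i \<ge> 0 are truncated at any N beyond which all terms vanish).\<close>
definition vertex_algebra ::
  "('a::field \<Rightarrow> 'v::ab_group_add \<Rightarrow> 'v) \<Rightarrow> 'v \<Rightarrow> ('v \<Rightarrow> int \<Rightarrow> 'v \<Rightarrow> 'v) \<Rightarrow> bool" where
  "vertex_algebra sm vac Y \<longleftrightarrow>
     vector_space sm \<and>
     (\<forall>u n. Vector_Spaces.linear sm sm (Y u n)) \<and>
     (\<forall>n w. Vector_Spaces.linear sm sm (\<lambda>u. Y u n w)) \<and>
     (\<forall>u w. \<exists>N. \<forall>n\<ge>N. Y u n w = 0) \<and>
     (\<forall>n w. Y vac n w = (if n = -1 then w else 0)) \<and>
     (\<forall>v. Y v (-1) vac = v) \<and>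
     (\<forall>v n. n \<ge> 0 \<longrightarrow> Y v n vac = 0) \<and>
     (\<forall>u v w l m n (N::nat).
        (\<forall>i\<ge>N. Y u (l + int i) v = 0 \<and> Y v (n + int i) w = 0 \<and> Y u (m + int i) w = 0) \<longrightarrow>
        (\<Sum>i<N. sm (of_int (ibinom m i)) (Y (Y u (l + int i) v) (m + n - int i) w)) =
        (\<Sum>i<N. sm ((-1) ^ i * of_int (ibinom l i))
                  (Y u (m + l - int i) (Y v (n + int i) w)
                   - sm ((-1) powi l) (Y v (n + l - int i) (Y u (m + int i) w)))))"

text \<open>Z-graded weight H-module, H = F \<otimes> U(sl2)_Z (Kostant Z-form).  Lm r is the action of
  L_{-1}^{(r)}, Lp r that of L_1^{(r)}; L_0^{(r)} acts on Vg n by binom(-2n, r), so it is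
  determined by the grading.  The module axioms are the defining relations of the Z-form on
  weight spaces: divided-power relations and the commutation formula
  L_1^{(a)} L_{-1}^{(b)} = sum_t (-1)^t binom(-2L_0 + a - b, t) L_{-1}^{(b-t)} L_1^{(a-t)}
  (which is e^{(a)} f^{(b)} = sum_t f^{(b-t)} binom(h-a-b+2t,t) e^{(a-t)} for
  e = L_1, f = -L_{-1}, h = -2 L_0).\<close>
definition graded_weight_H_module ::
  "('a::field \<Rightarrow> 'v::ab_group_add \<Rightarrow> 'v) \<Rightarrow> (int \<Rightarrow> 'v set) \<Rightarrow> (nat \<Rightarrow> 'v \<Rightarrow> 'v) \<Rightarrow> (nat \<Rightarrow> 'v \<Rightarrow> 'v) \<Rightarrow> bool" where
  "graded_weight_H_module sm Vg Lm Lp \<longleftrightarrow>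
     vector_space sm \<and> graded_space sm Vg \<and>
     (\<forall>r. Vector_Spaces.linear sm sm (Lm r) \<and> Vector_Spaces.linear sm sm (Lp r)) \<and>
     (\<forall>r n v. v \<in> Vg n \<longrightarrow> Lm r v \<in> Vg (n + int r) \<and> Lp r v \<in> Vg (n - int r)) \<and>
     (\<forall>v. Lm 0 v = v \<and> Lp 0 v = v) \<and>
     (\<forall>a b v. Lm a (Lm b v) = sm (of_nat (a + b choose b)) (Lm (a + b) v)) \<and>
     (\<forall>a b v. Lp a (Lp b v) = sm (of_nat (a + b choose b)) (Lp (a + b) v)) \<and>
     (\<forall>a b n v. v \<in> Vg n \<longrightarrow>
        Lp a (Lm b v) =
        (\<Sum>t\<le>min a b. sm ((-1) ^ t * of_int (ibinom (-2 * n + int a - int b) t))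
                         (Lm (b - t) (Lp (a - t) v))))"

text \<open>The conjugation formula
  e^{zL_1} Y(v,z0) e^{-zL_1} = Y(e^{z(1-z z0)L_1}(1-z z0)^{-2 deg} v, z0/(1-z z0))
  is stated coefficientwise: for v homogeneous of degree d, the coefficient of
  z^M z0^{-s-1} applied to w.\<close>
definition H_module_VA ::
  "('a::field \<Rightarrow> 'v::ab_group_add \<Rightarrow> 'v) \<Rightarrow> 'v \<Rightarrow> ('v \<Rightarrow> int \<Rightarrow> 'v \<Rightarrow> 'v) \<Rightarrow> (int \<Rightarrow> 'v set)
     \<Rightarrow> (nat \<Rightarrow> 'v \<Rightarrow> 'v) \<Rightarrow> (nat \<Rightarrow> 'v \<Rightarrow> 'v) \<Rightarrow> bool" where
  "H_module_VA sm vac Y Vg Lm Lp \<longleftrightarrow>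
     vertex_algebra sm vac Y \<and>
     graded_weight_H_module sm Vg Lm Lp \<and>
     vac \<in> Vg 0 \<and>
     (\<forall>m n r u w. u \<in> Vg m \<longrightarrow> w \<in> Vg n \<longrightarrow> Y u r w \<in> Vg (m + n - r - 1)) \<and>
     (\<forall>n v. Lm n v = Y v (- int n - 1) vac) \<and>
     (\<exists>N. \<forall>n<N. Vg n = {0}) \<and>
     (\<forall>n. Lp n vac = (if n = 0 then vac else 0)) \<and>
     (\<forall>d v M s w. v \<in> Vg d \<longrightarrow>
        (\<Sum>a\<le>M. sm ((-1) ^ (M - a)) (Lp a (Y v s (Lp (M - a) w)))) =
        (\<Sum>j\<le>M. sm ((-1) ^ j * of_int (ibinom (int M + s + 1 - 2 * d) j))
                     (Y (Lp (M - j) v) (s + int j) w)))"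

definition bilinear_form :: "('a::field \<Rightarrow> 'v::ab_group_add \<Rightarrow> 'v) \<Rightarrow> ('v \<Rightarrow> 'v \<Rightarrow> 'a) \<Rightarrow> bool" where
  "bilinear_form sm B \<longleftrightarrow>
     (\<forall>w. Vector_Spaces.linear sm (*) (\<lambda>u. B u w)) \<and>
     (\<forall>u. Vector_Spaces.linear sm (*) (\<lambda>w. B u w))"

end

theory Submission
  imports Defs
begin

lemma lin_scale: "Vector_Spaces.linear s1 s2 f \<Longrightarrow> f (s1 c x) = s2 c (f x)"
  by (rule module_hom.scale[OF Vector_Spaces.linear.axioms(3)])
lemma lin_sum: "Vector_Spaces.linear s1 s2 f \<Longrightarrow> f (sum g S) = (\<Sum>a\<in>S. f (g a))"
  by (rule module_hom.sum[OF Vector_Spaces.linear.axioms(3)])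
lemma lin_zero: "Vector_Spaces.linear s1 s2 f \<Longrightarrow> f 0 = 0"
  by (rule module_hom.zero[OF Vector_Spaces.linear.axioms(3)])
lemma mo: "(-1::'a::field) powi (2*d - int k) = (-1)^k"
  by (simp add: power_int_minus_left minus_one_power_iff)
lemma ib0: "ibinom 0 0 = 1" "j \<noteq> 0 \<Longrightarrow> ibinom 0 j = 0"
proof -
  show "ibinom 0 0 = 1" by (simp add: ibinom_def)
  assume "j \<noteq> 0"
  hence "(\<Prod>i<j. (0::int) - int i) = 0" by (intro prod_zero) auto
  thus "ibinom 0 j = 0" unfolding ibinom_def by (simp only:) simp
qed
lemma sum0: "(\<And>a. a \<le> k \<Longrightarrow> a \<noteq> 0 \<Longrightarrow> f a = 0) \<Longrightarrow> sum f {..(k::nat)} = (f 0 :: 'b::comm_monoid_add)"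
  by (subst sum.remove[of _ 0]) (auto intro!: sum.neutral)


theorem lemma4p5:
  fixes sm :: "'a::alg_closed_field \<Rightarrow> 'v::ab_group_add \<Rightarrow> 'v"
    and vac :: 'v and Y :: "'v \<Rightarrow> int \<Rightarrow> 'v \<Rightarrow> 'v" and Vg :: "int \<Rightarrow> 'v set"
    and Lm Lp :: "nat \<Rightarrow> 'v \<Rightarrow> 'v" and B :: "'v \<Rightarrow> 'v \<Rightarrow> 'a" and p :: nat
  assumes char: "CHAR('a) = p" and "prime p" and "odd p"
    and HVA: "H_module_VA sm vac Y Vg Lm Lp"
    and neg: "\<forall>n<0. Vg n = {0}"
    and bil: "bilinear_form sm B"
    and inv: "\<forall>d v w w' n. v \<in> Vg d \<longrightarrow>
               B (Y v n w) w' =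
               (-1) powi d * (\<Sum>k\<le>nat d. B w (Y (Lp k v) (2 * d - n - 2 - int k) w'))"
    and orth: "\<forall>m n u w. m \<noteq> n \<longrightarrow> u \<in> Vg m \<longrightarrow> w \<in> Vg n \<longrightarrow> B u w = 0"
  shows "\<forall>u w. B u w = B w u"
  proof -
  from HVA have VA: "vertex_algebra sm vac Y" and GW: "graded_weight_H_module sm Vg Lm Lp"
    and deg: "\<forall>m n r u w. u \<in> Vg m \<longrightarrow> w \<in> Vg n \<longrightarrow> Y u r w \<in> Vg (m + n - r - 1)"
    and conj: "\<forall>d v M s w. v \<in> Vg d \<longrightarrow>
        (\<Sum>a\<le>M. sm ((-1) ^ (M - a)) (Lp a (Y v s (Lp (M - a) w)))) =
        (\<Sum>j\<le>M. sm ((-1) ^ j * of_int (ibinom (int M + s + 1 - 2 * d) j))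
                     (Y (Lp (M - j) v) (s + int j) w))"
    unfolding H_module_VA_def by blast+
  from VA have linY1: "\<And>u n. Vector_Spaces.linear sm sm (Y u n)"
    and linY2: "\<And>n w. Vector_Spaces.linear sm sm (\<lambda>u. Y u n w)"
    and cre: "\<And>v. Y v (-1) vac = v"
    and vpos: "\<And>v n. n \<ge> 0 \<Longrightarrow> Y v n vac = 0"
    and borch: "\<forall>u v w l m n (N::nat).
        (\<forall>i\<ge>N. Y u (l + int i) v = 0 \<and> Y v (n + int i) w = 0 \<and> Y u (m + int i) w = 0) \<longrightarrow>
        (\<Sum>i<N. sm (of_int (ibinom m i)) (Y (Y u (l + int i) v) (m + n - int i) w)) =
        (\<Sum>i<N. sm ((-1) ^ i * of_int (ibinom l i))
                  (Y u (m + l - int i) (Y v (n + int i) w)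
                   - sm ((-1) powi l) (Y v (n + l - int i) (Y u (m + int i) w))))"
    and vs: "vector_space sm"
    unfolding vertex_algebra_def by blast+
  from GW have Lpdeg: "\<And>r n v. v \<in> Vg n \<Longrightarrow> Lp r v \<in> Vg (n - int r)"
    and Lp0: "\<And>v. Lp 0 v = v" and gs: "graded_space sm Vg"
    unfolding graded_weight_H_module_def by blast+
  from bil have Bl: "\<And>w. Vector_Spaces.linear sm (*) (\<lambda>u. B u w)"
    and Br: "\<And>u. Vector_Spaces.linear sm (*) (\<lambda>w. B u w)"
    unfolding bilinear_form_def by blast+
  have Y0r: "Y u n 0 = 0" for u n using lin_zero[OF linY1] .
  have Y0l: "Y 0 n w = 0" for w n using lin_zero[OF linY2[of n w]] by simp
  have B0l: "B 0 w = 0" for w using lin_zero[OF Bl[of w]] by simp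
  have B0r: "B u 0 = 0" for u using lin_zero[OF Br[of u]] by simp
  have Bsc: "B u (sm c x) = c * B u x" for u c x using lin_scale[OF Br[of u]] by simp
  have sm1: "sm 1 x = x" for x using vs by (simp add: vector_space_def module.scale_one)
  have negz: "\<And>n x. n < 0 \<Longrightarrow> x \<in> Vg n \<Longrightarrow> x = 0" using neg by blast
  have skew: "Y a (p + q - 1) b = sm ((-1) powi (p + q)) (Y b (p + q - 1) a)"
    if a: "a \<in> Vg p" and b: "b \<in> Vg q" for a b p q
  proof -
    have z: "Y a (p + q + int i) b = 0" for i
    proof (rule negz)
      show "Y a (p + q + int i) b \<in> Vg (p + q - (p + q + int i) - 1)" using deg a b by blast
    qed simp
    have P: "\<And>i. 1 \<le> i \<Longrightarrow> Y a (p + q + int i) b = 0 \<and> Y b (-1 + int i) vac = 0 \<and> Y a (-1 + int i) vac = 0"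
      using z vpos by auto
    from borch[rule_format, where u=a and v=b and w=vac and l="p + q" and m="-1" and n="-1" and N=1, OF P]
    have "sm (of_int (ibinom (-1) 0)) (Y (Y a (p + q + int 0) b) (-1 + -1 - int 0) vac) =
       sm ((-1) ^ 0 * of_int (ibinom (p + q) 0))
                  (Y a (-1 + (p + q) - int 0) (Y b (-1 + int 0) vac)
                   - sm ((-1) powi (p + q)) (Y b (-1 + (p + q) - int 0) (Y a (-1 + int 0) vac)))"
      by simp
    hence "0 = Y a (p + q - 1) b - sm ((-1) powi (p + q)) (Y b (p + q - 1) a)"
      using z[of 0] by (simp add: ibinom_def sm1 Y0l cre algebra_simps)
    thus ?thesis by simp
  qed
  have Lpvac: "B vac (Lp a y) = 0" if a1: "1 \<le> a" and ya: "y \<in> Vg (int a)" for a y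
  proof -
    obtain a' where a': "a = Suc a'" using a1 by (cases a) auto
    have "B (Y y (int a - 1) vac) vac = (-1) powi (int a) *
        (\<Sum>k\<le>nat (int a). B vac (Y (Lp k y) (2 * int a - (int a - 1) - 2 - int k) vac))"
      using inv[rule_format, OF ya, where w=vac and ?w'=vac and n="int a - 1"] by simp
    also have "(\<Sum>k\<le>nat (int a). B vac (Y (Lp k y) (2 * int a - (int a - 1) - 2 - int k) vac))
        = B vac (Lp a y)"
      unfolding a' nat_int by (simp add: vpos B0r cre)
    finally show ?thesis using vpos[of "int a - 1" y] a1 B0l by simp
  qed
  have cstep: "B vac (Y (Lp k u) (2 * d - 1 - int k) w) = (-1)^k * B vac (Y u (2 * d - 1 - int k) (Lp k w))"
    if u: "u \<in> Vg d" and w: "w \<in> Vg d" for u w d k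
  proof -
    define s where "s = 2 * d - 1 - int k"
    have e: "B vac (\<Sum>a\<le>k. sm ((-1) ^ (k - a)) (Lp a (Y u s (Lp (k - a) w)))) =
        B vac (\<Sum>j\<le>k. sm ((-1) ^ j * of_int (ibinom (int k + s + 1 - 2 * d) j))
                     (Y (Lp (k - j) u) (s + int j) w))"
      by (rule arg_cong[where f="B vac", OF conj[rule_format, OF u, where M=k and s=s and w=w]])
    have l: "B vac (\<Sum>a\<le>k. sm ((-1) ^ (k - a)) (Lp a (Y u s (Lp (k - a) w))))
       = (-1)^k * B vac (Y u s (Lp k w))"
      unfolding lin_sum[OF Br] Bsc
    proof (subst sum0)
      fix a assume "a \<le> k" "a \<noteq> 0"
      have "Lp (k - a) w \<in> Vg (d - int (k - a))" using Lpdeg w .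
      hence "Y u s (Lp (k - a) w) \<in> Vg (d + (d - int (k - a)) - s - 1)" using deg u by blast
      also have "d + (d - int (k - a)) - s - 1 = int a" using \<open>a \<le> k\<close> by (simp add: s_def)
      finally show "(-1) ^ (k - a) * B vac (Lp a (Y u s (Lp (k - a) w))) = 0"
        using Lpvac \<open>a \<noteq> 0\<close> by simp
    qed (simp add: Lp0)
    have r: "B vac (\<Sum>j\<le>k. sm ((-1) ^ j * of_int (ibinom (int k + s + 1 - 2 * d) j))
                     (Y (Lp (k - j) u) (s + int j) w)) = B vac (Y (Lp k u) s w)"
      unfolding lin_sum[OF Br] Bsc
      by (subst sum0) (auto simp: s_def ib0)
    show ?thesis using e l r by (simp add: s_def)
  qed
  have homog: "B u w = B w u" if u: "u \<in> Vg d" and w: "w \<in> Vg d" for u w d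
  proof (cases "d < 0")
    case True thus ?thesis using negz u w by metis
  next
    case False
    have hu: "B u w = (-1) powi d * (\<Sum>k\<le>nat d. B vac (Y (Lp k u) (2 * d - 1 - int k) w))"
      using inv[rule_format, OF u, where w=vac and ?w'=w and n="-1"] cre by simp
    have hw: "B w u = (-1) powi d * (\<Sum>k\<le>nat d. B vac (Y (Lp k w) (2 * d - 1 - int k) u))"
      using inv[rule_format, OF w, where w=vac and ?w'=u and n="-1"] cre by simp
    have "B vac (Y (Lp k w) (2 * d - 1 - int k) u) = (-1)^k * B vac (Y u (2 * d - 1 - int k) (Lp k w))" for k
    proof -
      have eq: "(d - int k) + d = 2 * d - int k" by simp
      have "Y (Lp k w) ((d - int k) + d - 1) u = sm ((-1) powi ((d - int k) + d)) (Y u ((d - int k) + d - 1) (Lp k w))"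
        using skew[OF Lpdeg[OF w] u] .
      hence "Y (Lp k w) (2 * d - int k - 1) u = sm ((-1)^k) (Y u (2 * d - int k - 1) (Lp k w))"
        unfolding eq mo .
      hence "Y (Lp k w) (2 * d - 1 - int k) u = sm ((-1)^k) (Y u (2 * d - 1 - int k) (Lp k w))"
        by (simp add: algebra_simps)
      thus ?thesis using Bsc by simp
    qed
    thus ?thesis using hu hw cstep[OF u w] by simp
  qed
  show ?thesis
  proof (intro allI)
    fix u w
    obtain c where c: "finite {n. c n \<noteq> 0}" "\<forall>n. c n \<in> Vg n" "u = sum c {n. c n \<noteq> 0}"
      using gs unfolding graded_space_def by (meson ex1_implies_ex)
    obtain e where e: "finite {n. e n \<noteq> 0}" "\<forall>n. e n \<in> Vg n" "w = sum e {n. e n \<noteq> 0}"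
      using gs unfolding graded_space_def by (meson ex1_implies_ex)
    define S where "S = {n. c n \<noteq> 0}"
    define T where "T = {n. e n \<noteq> 0}"
    have pair: "B (c m) (e n) = B (e n) (c m)" for m n
    proof (cases "m = n")
      case True thus ?thesis using homog[of "c m" m "e n"] c(2) e(2) by simp
    next
      case False
      hence "B (c m) (e n) = 0" using orth c(2) e(2) by blast
      moreover have "B (e n) (c m) = 0" using orth c(2) e(2) False by metis
      ultimately show ?thesis by simp
    qed
    have "B u w = (\<Sum>m\<in>S. \<Sum>n\<in>T. B (c m) (e n))"
      unfolding c(3) e(3) S_def[symmetric] T_def[symmetric] lin_sum[OF Bl] lin_sum[OF Br] by (rule refl | rule sum.swap)
    also have "\<dots> = (\<Sum>n\<in>T. \<Sum>m\<in>S. B (e n) (c m))"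
      by (subst sum.swap) (simp add: pair)
    also have "\<dots> = B w u"
      unfolding c(3) e(3) S_def[symmetric] T_def[symmetric] lin_sum[OF Bl] lin_sum[OF Br] by (rule refl | rule sum.swap)
    finally show "B u w = B w u" .
  qed
qed

end
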